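(* Let $p\colon X\to B_1$ and $q\colon Y\to B_2$ be Boolean sets and $\varphi\colon X\to Y$ a morphism of Boolean sets. Then $\varphi(x\vee y)=\varphi(x)\vee\varphi(y)$ for all compatible $x,y\in X$.
   Context: Convention: a "Boolean algebra" means a generalized Boolean algebra (relatively complemented distributive lattice with $0$); morphisms of Boolean algebras preserve lattice operations, $0$ and relative complements. Presheaf of sets over a meet semilattice $E$: pairwise disjoint sets $X_e$, restriction maps $x\mapsto x|^e_f$, $X_e\to X_f$ for $e\ge f$, with $|^e_e=\mathrm{id}$ and $(x|^e_f)|^f_g=x|^e_g$; $p(x)=e$ iff $x\in X_e$; global support: all $X_e\ne\emptyset$. Order: $x\le y$ iff $p(x)\le p(y)$ and $x=y|^{p(y)}_{p(x)}$. Compatibility $x\sim y$: $x\wedge y$ exists and $p(x\wedge y)=p(x)\wedge p(y)$. A Boolean set is a presheaf $p\colon X\to B$ with global support over a Boolean algebra $B$ such that $(X,\le)$ has least element $0$, compatible pairs have joins, and $p(x)=0\Rightarrow x=0$. A morphism of Boolean sets is a map $\varphi\colon X\to Y$ with a morphism of Boolean algebras $\overline{\varphi}\colon B_1\to B_2$ such that $q\varphi=\overline{\varphi}p$ and $\varphi(x|^a_b)=\varphi(x)|^{\overline{\varphi}(a)}_{\overline{\varphi}(b)}$ for all $a\ge b$ and $x\in X_a$. *)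

theory Defs
  imports Main
begin

definition is_lub :: "('a \<Rightarrow> 'a \<Rightarrow> bool) \<Rightarrow> 'a set \<Rightarrow> 'a set \<Rightarrow> 'a \<Rightarrow> bool" where
  "is_lub le S A u \<longleftrightarrow> u \<in> S \<and> (\<forall>a\<in>A. le a u) \<and> (\<forall>v\<in>S. (\<forall>a\<in>A. le a v) \<longrightarrow> le u v)"

definition is_glb :: "('a \<Rightarrow> 'a \<Rightarrow> bool) \<Rightarrow> 'a set \<Rightarrow> 'a set \<Rightarrow> 'a \<Rightarrow> bool" where
  "is_glb le S A m \<longleftrightarrow> m \<in> S \<and> (\<forall>a\<in>A. le m a) \<and> (\<forall>v\<in>S. (\<forall>a\<in>A. le v a) \<longrightarrow> le v m)"

definition partial_order_on' :: "'a set \<Rightarrow> ('a \<Rightarrow> 'a \<Rightarrow> bool) \<Rightarrow> bool" where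
  "partial_order_on' S le \<longleftrightarrow>
     (\<forall>a\<in>S. le a a) \<and>
     (\<forall>a\<in>S. \<forall>b\<in>S. le a b \<and> le b a \<longrightarrow> a = b) \<and>
     (\<forall>a\<in>S. \<forall>b\<in>S. \<forall>c\<in>S. le a b \<and> le b c \<longrightarrow> le a c)"

record 'b balg =
  bcarrier :: "'b set"
  ble :: "'b \<Rightarrow> 'b \<Rightarrow> bool"

definition bmeet :: "'b balg \<Rightarrow> 'b \<Rightarrow> 'b \<Rightarrow> 'b" where
  "bmeet B a b = (THE m. is_glb (ble B) (bcarrier B) {a, b} m)"

definition bjoin :: "'b balg \<Rightarrow> 'b \<Rightarrow> 'b \<Rightarrow> 'b" where
  "bjoin B a b = (THE j. is_lub (ble B) (bcarrier B) {a, b} j)"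

definition bzero :: "'b balg \<Rightarrow> 'b" where
  "bzero B = (THE z. z \<in> bcarrier B \<and> (\<forall>a\<in>bcarrier B. ble B z a))"

definition bdiff :: "'b balg \<Rightarrow> 'b \<Rightarrow> 'b \<Rightarrow> 'b" where
  "bdiff B b a = (THE c. c \<in> bcarrier B \<and> bmeet B c (bmeet B a b) = bzero B
                         \<and> bjoin B c (bmeet B a b) = b)"

definition gen_boolean_algebra :: "'b balg \<Rightarrow> bool" where
  "gen_boolean_algebra B \<longleftrightarrow>
     partial_order_on' (bcarrier B) (ble B) \<and>
     (\<forall>a\<in>bcarrier B. \<forall>b\<in>bcarrier B. \<exists>m. is_glb (ble B) (bcarrier B) {a, b} m) \<and>
     (\<forall>a\<in>bcarrier B. \<forall>b\<in>bcarrier B. \<exists>j. is_lub (ble B) (bcarrier B) {a, b} j) \<and>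
     (\<forall>a\<in>bcarrier B. \<forall>b\<in>bcarrier B. \<forall>c\<in>bcarrier B.
        bmeet B a (bjoin B b c) = bjoin B (bmeet B a b) (bmeet B a c)) \<and>
     (\<exists>z\<in>bcarrier B. \<forall>a\<in>bcarrier B. ble B z a) \<and>
     (\<forall>a\<in>bcarrier B. \<forall>b\<in>bcarrier B. ble B a b \<longrightarrow>
        (\<exists>c\<in>bcarrier B. bmeet B a c = bzero B \<and> bjoin B a c = b))"

definition balg_hom :: "'b balg \<Rightarrow> 'c balg \<Rightarrow> ('b \<Rightarrow> 'c) \<Rightarrow> bool" where
  "balg_hom B1 B2 f \<longleftrightarrow>
     (\<forall>a\<in>bcarrier B1. f a \<in> bcarrier B2) \<and>
     (\<forall>a\<in>bcarrier B1. \<forall>b\<in>bcarrier B1. f (bmeet B1 a b) = bmeet B2 (f a) (f b)) \<and>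
     (\<forall>a\<in>bcarrier B1. \<forall>b\<in>bcarrier B1. f (bjoin B1 a b) = bjoin B2 (f a) (f b)) \<and>
     f (bzero B1) = bzero B2 \<and>
     (\<forall>a\<in>bcarrier B1. \<forall>b\<in>bcarrier B1. f (bdiff B1 b a) = bdiff B2 (f b) (f a))"

text \<open>A presheaf over B: the set X (disjoint union of the fibres X_e), the projection p
  (x in X_e iff p x = e), and restriction  restr x f = x|^{p x}_f  for f \<le> p x.\<close>
record ('x, 'b) bset =
  elts :: "'x set"
  base :: "'b balg"
  proj :: "'x \<Rightarrow> 'b"
  restr :: "'x \<Rightarrow> 'b \<Rightarrow> 'x"

definition presheaf :: "('x, 'b) bset \<Rightarrow> bool" where
  "presheaf S \<longleftrightarrow>
     (\<forall>x\<in>elts S. proj S x \<in> bcarrier (base S)) \<and>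
     (\<forall>x\<in>elts S. \<forall>f\<in>bcarrier (base S). ble (base S) f (proj S x) \<longrightarrow>
        restr S x f \<in> elts S \<and> proj S (restr S x f) = f) \<and>
     (\<forall>x\<in>elts S. restr S x (proj S x) = x) \<and>
     (\<forall>x\<in>elts S. \<forall>f\<in>bcarrier (base S). \<forall>g\<in>bcarrier (base S).
        ble (base S) g f \<and> ble (base S) f (proj S x) \<longrightarrow>
        restr S (restr S x f) g = restr S x g)"

definition global_support :: "('x, 'b) bset \<Rightarrow> bool" where
  "global_support S \<longleftrightarrow> (\<forall>e\<in>bcarrier (base S). \<exists>x\<in>elts S. proj S x = e)"

definition xle :: "('x, 'b) bset \<Rightarrow> 'x \<Rightarrow> 'x \<Rightarrow> bool" where
  "xle S x y \<longleftrightarrow> ble (base S) (proj S x) (proj S y) \<and> x = restr S y (proj S x)"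

definition compat :: "('x, 'b) bset \<Rightarrow> 'x \<Rightarrow> 'x \<Rightarrow> bool" where
  "compat S x y \<longleftrightarrow>
     (\<exists>m. is_glb (xle S) (elts S) {x, y} m \<and>
          proj S m = bmeet (base S) (proj S x) (proj S y))"

definition bs_zero :: "('x, 'b) bset \<Rightarrow> 'x" where
  "bs_zero S = (THE z. z \<in> elts S \<and> (\<forall>x\<in>elts S. xle S z x))"

definition boolean_set :: "('x, 'b) bset \<Rightarrow> bool" where
  "boolean_set S \<longleftrightarrow>
     gen_boolean_algebra (base S) \<and> presheaf S \<and> global_support S \<and>
     (\<exists>z\<in>elts S. \<forall>x\<in>elts S. xle S z x) \<and>
     (\<forall>x\<in>elts S. \<forall>y\<in>elts S. compat S x y \<longrightarrow> (\<exists>j. is_lub (xle S) (elts S) {x, y} j)) \<and>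
     (\<forall>x\<in>elts S. proj S x = bzero (base S) \<longrightarrow> x = bs_zero S)"

definition bset_morphism ::
  "('x, 'b) bset \<Rightarrow> ('y, 'c) bset \<Rightarrow> ('x \<Rightarrow> 'y) \<Rightarrow> ('b \<Rightarrow> 'c) \<Rightarrow> bool" where
  "bset_morphism S T \<phi> \<phi>b \<longleftrightarrow>
     (\<forall>x\<in>elts S. \<phi> x \<in> elts T) \<and>
     balg_hom (base S) (base T) \<phi>b \<and>
     (\<forall>x\<in>elts S. proj T (\<phi> x) = \<phi>b (proj S x)) \<and>
     (\<forall>x\<in>elts S. \<forall>b\<in>bcarrier (base S). ble (base S) b (proj S x) \<longrightarrow>
        \<phi> (restr S x b) = restr T (\<phi> x) (\<phi>b b))"

end

theory Submission
  imports Defs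
begin

lemma lub_unique:
  assumes "partial_order_on' S le" "is_lub le S A u" "is_lub le S A v"
  shows "u = v"
  using assms unfolding partial_order_on'_def is_lub_def by blast

lemma glb_unique:
  assumes "partial_order_on' S le" "is_glb le S A u" "is_glb le S A v"
  shows "u = v"
  using assms unfolding partial_order_on'_def is_glb_def by blast

lemma bjoin_lub:
  assumes "gen_boolean_algebra B" "a \<in> bcarrier B" "b \<in> bcarrier B"
  shows "is_lub (ble B) (bcarrier B) {a, b} (bjoin B a b)"
proof -
  from assms obtain j where j: "is_lub (ble B) (bcarrier B) {a, b} j"
    unfolding gen_boolean_algebra_def by blast
  have po: "partial_order_on' (bcarrier B) (ble B)" using assms(1) unfolding gen_boolean_algebra_def by blast
  show ?thesis unfolding bjoin_def
    by (rule theI[of _ j]) (use j lub_unique[OF po] in blast)+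
qed

lemma bmeet_glb:
  assumes "gen_boolean_algebra B" "a \<in> bcarrier B" "b \<in> bcarrier B"
  shows "is_glb (ble B) (bcarrier B) {a, b} (bmeet B a b)"
proof -
  from assms obtain j where j: "is_glb (ble B) (bcarrier B) {a, b} j"
    unfolding gen_boolean_algebra_def by blast
  have po: "partial_order_on' (bcarrier B) (ble B)" using assms(1) unfolding gen_boolean_algebra_def by blast
  show ?thesis unfolding bmeet_def
    by (rule theI[of _ j]) (use j glb_unique[OF po] in blast)+
qed

lemma po_of: "gen_boolean_algebra B \<Longrightarrow> partial_order_on' (bcarrier B) (ble B)"
  unfolding gen_boolean_algebra_def by blast

lemma ble_trans: "gen_boolean_algebra B \<Longrightarrow> a \<in> bcarrier B \<Longrightarrow> b \<in> bcarrier B \<Longrightarrow> c \<in> bcarrier B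
  \<Longrightarrow> ble B a b \<Longrightarrow> ble B b c \<Longrightarrow> ble B a c"
  using po_of unfolding partial_order_on'_def by blast

lemma ble_antisym: "gen_boolean_algebra B \<Longrightarrow> a \<in> bcarrier B \<Longrightarrow> b \<in> bcarrier B
  \<Longrightarrow> ble B a b \<Longrightarrow> ble B b a \<Longrightarrow> a = b"
  using po_of unfolding partial_order_on'_def by blast

lemma ble_refl: "gen_boolean_algebra B \<Longrightarrow> a \<in> bcarrier B \<Longrightarrow> ble B a a"
  using po_of unfolding partial_order_on'_def by blast

lemma join_proj:
  assumes B: "gen_boolean_algebra (base S)" and P: "presheaf S"
    and x: "x \<in> elts S" and y: "y \<in> elts S"
    and j: "is_lub (xle S) (elts S) {x, y} j"
  shows "proj S j = bjoin (base S) (proj S x) (proj S y)"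
proof -
  let ?B = "base S"
  have pc: "\<And>z. z \<in> elts S \<Longrightarrow> proj S z \<in> bcarrier ?B" using P unfolding presheaf_def by blast
  have jel: "j \<in> elts S" using j unfolding is_lub_def by blast
  have xj: "xle S x j" and yj: "xle S y j" using j unfolding is_lub_def by auto
  define e where "e = bjoin ?B (proj S x) (proj S y)"
  have el: "is_lub (ble ?B) (bcarrier ?B) {proj S x, proj S y} e"
    unfolding e_def by (rule bjoin_lub[OF B pc[OF x] pc[OF y]])
  have ec: "e \<in> bcarrier ?B" and xe: "ble ?B (proj S x) e" and ye: "ble ?B (proj S y) e"
    using el unfolding is_lub_def by auto
  have ej: "ble ?B e (proj S j)"
    using el xj yj pc[OF jel] unfolding is_lub_def xle_def by auto
  define z where "z = restr S j e"
  have zel: "z \<in> elts S" and pz: "proj S z = e"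
    using P jel ec ej unfolding z_def presheaf_def by auto
  have comp: "\<And>g. g \<in> bcarrier ?B \<Longrightarrow> ble ?B g e \<Longrightarrow> restr S z g = restr S j g"
    using P jel ec ej unfolding z_def presheaf_def by blast
  have "xle S x z" unfolding xle_def using pz xe comp[OF pc[OF x] xe] xj unfolding xle_def by simp
  moreover have "xle S y z" unfolding xle_def using pz ye comp[OF pc[OF y] ye] yj unfolding xle_def by simp
  ultimately have "xle S j z" using j zel unfolding is_lub_def by blast
  hence "ble ?B (proj S j) e" using pz unfolding xle_def by simp
  thus ?thesis using ble_antisym[OF B pc[OF jel] ec] ej unfolding e_def by simp
qed

lemma glue:
  assumes T: "boolean_set T"
    and a: "a \<in> elts T" and b: "b \<in> elts T" and pab: "proj T a = proj T b"
    and c: "c \<in> bcarrier (base T)" and d: "d \<in> bcarrier (base T)"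
    and ca: "ble (base T) c (proj T a)" and da: "ble (base T) d (proj T a)"
    and e: "proj T a = bjoin (base T) c d"
    and rc: "restr T a c = restr T b c" and rd: "restr T a d = restr T b d"
  shows "a = b"
proof -
  let ?B = "base T"
  have B: "gen_boolean_algebra ?B" and P: "presheaf T" using T unfolding boolean_set_def by auto
  have pc: "\<And>z. z \<in> elts T \<Longrightarrow> proj T z \<in> bcarrier ?B" using P unfolding presheaf_def by blast
  have rel: "\<And>z f. z \<in> elts T \<Longrightarrow> f \<in> bcarrier ?B \<Longrightarrow> ble ?B f (proj T z) \<Longrightarrow>
      restr T z f \<in> elts T \<and> proj T (restr T z f) = f" using P unfolding presheaf_def by blast
  have rid: "\<And>z. z \<in> elts T \<Longrightarrow> restr T z (proj T z) = z" using P unfolding presheaf_def by blast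
  have rcomp: "\<And>z f g. z \<in> elts T \<Longrightarrow> f \<in> bcarrier ?B \<Longrightarrow> g \<in> bcarrier ?B \<Longrightarrow>
      ble ?B g f \<Longrightarrow> ble ?B f (proj T z) \<Longrightarrow> restr T (restr T z f) g = restr T z g"
    using P unfolding presheaf_def by blast
  define u where "u = restr T a c"
  define w where "w = restr T a d"
  define mm where "mm = bmeet ?B c d"
  have mg: "is_glb (ble ?B) (bcarrier ?B) {c, d} mm" unfolding mm_def by (rule bmeet_glb[OF B c d])
  have mc: "mm \<in> bcarrier ?B" and mlc: "ble ?B mm c" and mld: "ble ?B mm d"
    using mg unfolding is_glb_def by auto
  have mla: "ble ?B mm (proj T a)" using ble_trans[OF B mc c pc[OF a] mlc ca] .
  have uel: "u \<in> elts T" and pu: "proj T u = c" using rel[OF a c ca] unfolding u_def by auto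
  have wel: "w \<in> elts T" and pw: "proj T w = d" using rel[OF a d da] unfolding w_def by auto
  define m where "m = restr T a mm"
  have mel: "m \<in> elts T" and pm: "proj T m = mm" using rel[OF a mc mla] unfolding m_def by auto
  have "is_glb (xle T) (elts T) {u, w} m"
    unfolding is_glb_def
  proof (intro conjI ballI impI)
    show "m \<in> elts T" by (rule mel)
  next
    fix z assume "z \<in> {u, w}"
    thus "xle T m z"
    proof
      assume "z = u" thus ?thesis unfolding xle_def using pm pu mlc rcomp[OF a c mc mlc ca]
        unfolding u_def m_def by simp
    next
      assume "z \<in> {w}" hence "z = w" by simp
      thus ?thesis unfolding xle_def using pm pw mld rcomp[OF a d mc mld da]
        unfolding w_def m_def by simp
    qed
  next
    fix v assume vel: "v \<in> elts T" and lb: "\<forall>z\<in>{u, w}. xle T v z"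
    have vu: "xle T v u" and vw: "xle T v w" using lb by auto
    have vc: "ble ?B (proj T v) c" and vd: "ble ?B (proj T v) d" using vu vw pu pw unfolding xle_def by auto
    have vm: "ble ?B (proj T v) mm" using mg vc vd pc[OF vel] unfolding is_glb_def by auto
    have "v = restr T u (proj T v)" using vu unfolding xle_def by simp
    also have "\<dots> = restr T a (proj T v)" unfolding u_def using rcomp[OF a c pc[OF vel] vc ca] .
    also have "\<dots> = restr T m (proj T v)" unfolding m_def using rcomp[OF a mc pc[OF vel] vm mla] by simp
    finally show "xle T v m" unfolding xle_def using vm pm by simp
  qed
  hence "compat T u w" unfolding compat_def using pm pu pw mm_def by blast
  then obtain J where J: "is_lub (xle T) (elts T) {u, w} J"
    using T uel wel unfolding boolean_set_def by blast
  have pJ: "proj T J = proj T a" using join_proj[OF B P uel wel J] pu pw e by simp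
  have Jel: "J \<in> elts T" using J unfolding is_lub_def by blast
  have ua: "xle T u a" unfolding xle_def u_def using pu ca u_def by simp
  have wa: "xle T w a" unfolding xle_def w_def using pw da w_def by simp
  have rcb: "ble ?B c (proj T b)" and rdb: "ble ?B d (proj T b)" using ca da pab by auto
  have ub: "xle T u b" unfolding xle_def using pu rcb rc u_def by simp
  have wb: "xle T w b" unfolding xle_def using pw rdb rd w_def by simp
  have "xle T J a" using J ua wa a unfolding is_lub_def by blast
  hence "J = a" using pJ rid[OF a] unfolding xle_def by simp
  moreover have "xle T J b" using J ub wb b unfolding is_lub_def by blast
  hence "J = b" using pJ pab rid[OF b] unfolding xle_def by simp
  ultimately show ?thesis by simp
qed

theorem lemma1p8:
  fixes S :: "('x, 'b) bset" and T :: "('y, 'c) bset"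
    and \<phi> :: "'x \<Rightarrow> 'y" and \<phi>b :: "'b \<Rightarrow> 'c"
  assumes "boolean_set S" and "boolean_set T"
    and "bset_morphism S T \<phi> \<phi>b"
    and "x \<in> elts S" and "y \<in> elts S" and "compat S x y"
    and "is_lub (xle S) (elts S) {x, y} j"
  shows "is_lub (xle T) (elts T) {\<phi> x, \<phi> y} (\<phi> j)"
proof -
  note S = assms(1) and T = assms(2) and M = assms(3) and x = assms(4) and y = assms(5)
    and j = assms(7)
  let ?B = "base S" and ?C = "base T"
  have B: "gen_boolean_algebra ?B" and P: "presheaf S" using S unfolding boolean_set_def by auto
  have C: "gen_boolean_algebra ?C" and Q: "presheaf T" using T unfolding boolean_set_def by auto
  have pc: "\<And>z. z \<in> elts S \<Longrightarrow> proj S z \<in> bcarrier ?B" using P unfolding presheaf_def by blast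
  have qc: "\<And>z. z \<in> elts T \<Longrightarrow> proj T z \<in> bcarrier ?C" using Q unfolding presheaf_def by blast
  have qrel: "\<And>z f. z \<in> elts T \<Longrightarrow> f \<in> bcarrier ?C \<Longrightarrow> ble ?C f (proj T z) \<Longrightarrow>
      restr T z f \<in> elts T \<and> proj T (restr T z f) = f" using Q unfolding presheaf_def by blast
  have qcomp: "\<And>z f g. z \<in> elts T \<Longrightarrow> f \<in> bcarrier ?C \<Longrightarrow> g \<in> bcarrier ?C \<Longrightarrow>
      ble ?C g f \<Longrightarrow> ble ?C f (proj T z) \<Longrightarrow> restr T (restr T z f) g = restr T z g"
    using Q unfolding presheaf_def by blast
  have mel: "\<And>z. z \<in> elts S \<Longrightarrow> \<phi> z \<in> elts T" using M unfolding bset_morphism_def by blast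
  have H: "balg_hom ?B ?C \<phi>b" using M unfolding bset_morphism_def by blast
  have hc: "\<And>a. a \<in> bcarrier ?B \<Longrightarrow> \<phi>b a \<in> bcarrier ?C" using H unfolding balg_hom_def by blast
  have hj: "\<And>a b. a \<in> bcarrier ?B \<Longrightarrow> b \<in> bcarrier ?B \<Longrightarrow> \<phi>b (bjoin ?B a b) = bjoin ?C (\<phi>b a) (\<phi>b b)"
    using H unfolding balg_hom_def by blast
  have mp: "\<And>z. z \<in> elts S \<Longrightarrow> proj T (\<phi> z) = \<phi>b (proj S z)" using M unfolding bset_morphism_def by blast
  have mr: "\<And>z b. z \<in> elts S \<Longrightarrow> b \<in> bcarrier ?B \<Longrightarrow> ble ?B b (proj S z) \<Longrightarrow>
        \<phi> (restr S z b) = restr T (\<phi> z) (\<phi>b b)" using M unfolding bset_morphism_def by blast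
  have jel: "j \<in> elts S" using j unfolding is_lub_def by blast
  have xj: "xle S x j" and yj: "xle S y j" using j unfolding is_lub_def by auto
  have pj: "proj S j = bjoin ?B (proj S x) (proj S y)" by (rule join_proj[OF B P x y j])
  define E where "E = \<phi>b (proj S j)"
  have E: "E = bjoin ?C (\<phi>b (proj S x)) (\<phi>b (proj S y))" unfolding E_def pj
    using hj[OF pc[OF x] pc[OF y]] .
  have El: "is_lub (ble ?C) (bcarrier ?C) {\<phi>b (proj S x), \<phi>b (proj S y)} E"
    unfolding E by (rule bjoin_lub[OF C hc[OF pc[OF x]] hc[OF pc[OF y]]])
  have Ec: "E \<in> bcarrier ?C" and xE: "ble ?C (\<phi>b (proj S x)) E" and yE: "ble ?C (\<phi>b (proj S y)) E"
    using El unfolding is_lub_def by auto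
  have pphj: "proj T (\<phi> j) = E" using mp[OF jel] E_def by simp
  have phx: "\<phi> x = restr T (\<phi> j) (\<phi>b (proj S x))"
    using mr[OF jel pc[OF x]] xj unfolding xle_def by simp
  have phy: "\<phi> y = restr T (\<phi> j) (\<phi>b (proj S y))"
    using mr[OF jel pc[OF y]] yj unfolding xle_def by simp
  show ?thesis unfolding is_lub_def
  proof (intro conjI ballI impI)
    show "\<phi> j \<in> elts T" by (rule mel[OF jel])
  next
    fix z assume "z \<in> {\<phi> x, \<phi> y}"
    thus "xle T z (\<phi> j)" unfolding xle_def using mp[OF x] mp[OF y] pphj xE yE phx phy by auto
  next
    fix v assume vel: "v \<in> elts T" and ub: "\<forall>a\<in>{\<phi> x, \<phi> y}. xle T a v"
    have xv: "xle T (\<phi> x) v" and yv: "xle T (\<phi> y) v" using ub by auto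
    have xv1: "ble ?C (\<phi>b (proj S x)) (proj T v)" "\<phi> x = restr T v (\<phi>b (proj S x))"
      using xv mp[OF x] unfolding xle_def by auto
    have yv1: "ble ?C (\<phi>b (proj S y)) (proj T v)" "\<phi> y = restr T v (\<phi>b (proj S y))"
      using yv mp[OF y] unfolding xle_def by auto
    have Ev: "ble ?C E (proj T v)" using El xv1(1) yv1(1) qc[OF vel] unfolding is_lub_def by auto
    define v' where "v' = restr T v E"
    have v'el: "v' \<in> elts T" and pv': "proj T v' = E" using qrel[OF vel Ec Ev] unfolding v'_def by auto
    have "\<phi> j = v'"
    proof (rule glue[OF T mel[OF jel] v'el])
      show "proj T (\<phi> j) = proj T v'" using pphj pv' by simp
      show "\<phi>b (proj S x) \<in> bcarrier ?C" "\<phi>b (proj S y) \<in> bcarrier ?C" using hc pc x y by auto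
      show "ble ?C (\<phi>b (proj S x)) (proj T (\<phi> j))" "ble ?C (\<phi>b (proj S y)) (proj T (\<phi> j))"
        using pphj xE yE by auto
      show "proj T (\<phi> j) = bjoin ?C (\<phi>b (proj S x)) (\<phi>b (proj S y))" using pphj E by simp
      show "restr T (\<phi> j) (\<phi>b (proj S x)) = restr T v' (\<phi>b (proj S x))"
        using phx xv1(2) qcomp[OF vel Ec hc[OF pc[OF x]] xE Ev] v'_def by simp
      show "restr T (\<phi> j) (\<phi>b (proj S y)) = restr T v' (\<phi>b (proj S y))"
        using phy yv1(2) qcomp[OF vel Ec hc[OF pc[OF y]] yE Ev] v'_def by simp
    qed
    thus "xle T (\<phi> j) v" unfolding xle_def using pphj Ev v'_def by simp
  qed
qed

end
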